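(* Let $(X,(\cdot,\cdot))$ be a real finite-dimensional Hilbert space, let $\delta>0$, and let $L,G\in\mathfrak{L}_+(X)$ satisfy $\min\big(d_\sigma(L^{-1},G),\,d_\sigma(L,G^{-1})\big)\leqslant\delta$. Then the spectral radius of $I-LG$ satisfies $$\rho(I-LG)\leqslant\frac{e^\delta-1}{\delta}\,\min\big(d_\sigma(L^{-1},G),\,d_\sigma(L,G^{-1})\big).$$
   Context: $\mathfrak{L}_+(X)=\{T\in\mathfrak{L}(X):(Tu,u)>0\ \forall u\in X\setminus\{0\}\}$ (operators with positive definite symmetric part). For $S,T\in\mathfrak{L}_+(X)$, $W(S,T)=\{(S_{\mathbb C}w,w)/(T_{\mathbb C}w,w): w\in X^{\mathbb C}\setminus\{0\}\}$, where $X^{\mathbb C}$ is the complexification of $X$ and $T_{\mathbb C}(u+\mathbf{i}v)=Tu+\mathbf{i}Tv$; the spectral distance is $d_\sigma(S,T)=\sup\{|\ln z|: z\in W(S,T)\}$ with $\ln$ the principal branch on $\mathbb{C}\setminus(-\infty,0]$. *)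

theory Defs
  imports "HOL-Analysis.Analysis"
begin

text \<open>The complexification of a real space 'a is modelled as pairs (u,v), standing for u + i v.\<close>

definition cplx_op :: "('a \<Rightarrow> 'a) \<Rightarrow> 'a \<times> 'a \<Rightarrow> 'a \<times> 'a" where
  "cplx_op T w = (T (fst w), T (snd w))"

text \<open>Complex inner product on the complexification, linear in the first argument:
  (a + i b, c + i d) = (a,c) + (b,d) + i ((b,c) - (a,d)).\<close>
definition cinner :: "'a::real_inner \<times> 'a \<Rightarrow> 'a \<times> 'a \<Rightarrow> complex" where
  "cinner w z = Complex (inner (fst w) (fst z) + inner (snd w) (snd z))
                        (inner (snd w) (fst z) - inner (fst w) (snd z))"

definition cscale :: "complex \<Rightarrow> 'a::real_vector \<times> 'a \<Rightarrow> 'a \<times> 'a" where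
  "cscale c w = (Re c *\<^sub>R fst w - Im c *\<^sub>R snd w, Re c *\<^sub>R snd w + Im c *\<^sub>R fst w)"

definition pos_ops :: "('a::real_inner \<Rightarrow> 'a) set" where
  "pos_ops = {T. linear T \<and> (\<forall>u. u \<noteq> 0 \<longrightarrow> inner (T u) u > 0)}"

definition num_range :: "('a::real_inner \<Rightarrow> 'a) \<Rightarrow> ('a \<Rightarrow> 'a) \<Rightarrow> complex set" where
  "num_range S T = {cinner (cplx_op S w) w / cinner (cplx_op T w) w | w. w \<noteq> (0, 0)}"

definition spec_dist :: "('a::real_inner \<Rightarrow> 'a) \<Rightarrow> ('a \<Rightarrow> 'a) \<Rightarrow> real" where
  "spec_dist S T = Sup ((\<lambda>z. cmod (Ln z)) ` num_range S T)"

text \<open>Spectrum of a real operator = eigenvalues of its complexification (finite dimension).\<close>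
definition cspectrum :: "('a::real_vector \<Rightarrow> 'a) \<Rightarrow> complex set" where
  "cspectrum T = {c. \<exists>w. w \<noteq> (0, 0) \<and> cplx_op T w = cscale c w}"

definition op_spectral_radius :: "('a::real_vector \<Rightarrow> 'a) \<Rightarrow> real" where
  "op_spectral_radius T = Sup (cmod ` cspectrum T)"

end

theory Submission
  imports Defs "Jordan_Normal_Form.Spectral_Radius"
begin

unbundle no m_inv_syntax

lemma basis_coord:
  fixes bs :: "'a::euclidean_space list"
  assumes bs: "distinct bs" "set bs = Basis" and i: "i < length bs"
  shows "inner (\<Sum>j<length bs. c j *\<^sub>R bs!j) (bs!i) = c i"
proof -
  have "inner (\<Sum>j<length bs. c j *\<^sub>R bs!j) (bs!i) = (\<Sum>j<length bs. c j * inner (bs!j) (bs!i))"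
    by (simp add: inner_sum_left)
  also have "\<dots> = (\<Sum>j<length bs. if j = i then c i else 0)"
  proof (rule sum.cong[OF refl])
    fix j assume j: "j \<in> {..<length bs}"
    have bj: "bs!j \<in> Basis" "bs!i \<in> Basis" using bs j i nth_mem by auto
    have "bs!j = bs!i \<longleftrightarrow> j = i" using bs(1) j i nth_eq_iff_index_eq by auto
    then show "c j * inner (bs!j) (bs!i) = (if j = i then c i else 0)"
      using bj by (simp add: inner_Basis \<open>bs!j = bs!i \<longleftrightarrow> j = i\<close>)
  qed
  also have "\<dots> = c i" using i by simp
  finally show ?thesis .
qed

lemma cspectrum_nonempty:
  fixes T :: "'a::euclidean_space \<Rightarrow> 'a"
  assumes lin: "linear T"
  shows "cspectrum T \<noteq> {}"
proof -
  obtain bs :: "'a list" where bs: "distinct bs" "set bs = Basis"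
    using finite_distinct_list[OF finite_Basis] by blast
  define n where "n = length bs"
  have "n = DIM('a)" using bs distinct_card n_def by metis
  then have n0: "n > 0" by simp
  define A where "A = mat n n (\<lambda>(i,j). complex_of_real (inner (T (bs!j)) (bs!i)))"
  have Ac: "A \<in> carrier_mat n n" unfolding A_def by simp
  from spectrum_non_empty[OF Ac n0] obtain k where "eigenvalue A k"
    unfolding spectrum_def by auto
  then obtain v where v: "v \<in> carrier_vec n" "v \<noteq> 0\<^sub>v n" "A *\<^sub>v v = k \<cdot>\<^sub>v v"
    unfolding eigenvalue_def eigenvector_def using Ac by auto
  define u where "u = (\<Sum>j<n. Re (vec_index v j) *\<^sub>R bs!j)"
  define w where "w = (\<Sum>j<n. Im (vec_index v j) *\<^sub>R bs!j)"
  have cu: "inner u (bs!i) = Re (vec_index v i)" if "i < n" for i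
    unfolding u_def n_def by (rule basis_coord[OF bs that[unfolded n_def]])
  have cw: "inner w (bs!i) = Im (vec_index v i)" if "i < n" for i
    unfolding w_def n_def by (rule basis_coord[OF bs that[unfolded n_def]])
  have dv: "dim_vec v = n" using v(1) by simp
  have Av: "vec_index (A *\<^sub>v v) i = (\<Sum>j<n. complex_of_real (inner (T (bs!j)) (bs!i)) * vec_index v j)"
    if "i < n" for i
    using that Ac dv unfolding A_def
    by (simp add: scalar_prod_def row_def atLeast0LessThan)
  have kv: "vec_index (A *\<^sub>v v) i = k * vec_index v i" if "i < n" for i
    using v(3) that dv by simp
  have Tu: "T u = (\<Sum>j<n. Re (vec_index v j) *\<^sub>R T (bs!j))"
    unfolding u_def using lin by (simp add: linear_sum linear_scale)
  have Tw: "T w = (\<Sum>j<n. Im (vec_index v j) *\<^sub>R T (bs!j))"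
    unfolding w_def using lin by (simp add: linear_sum linear_scale)
  have e1: "T u = Re k *\<^sub>R u - Im k *\<^sub>R w"
  proof (rule euclidean_eqI)
    fix b :: 'a assume "b \<in> Basis"
    then obtain i where i: "i < n" "b = bs!i" using bs(2) n_def by (metis in_set_conv_nth)
    have "inner (T u) b = (\<Sum>j<n. Re (vec_index v j) * inner (T (bs!j)) (bs!i))"
      unfolding Tu i(2) by (simp add: inner_sum_left)
    also have "\<dots> = Re (vec_index (A *\<^sub>v v) i)"
      using Av[OF i(1)] by (simp add: Re_sum mult.commute)
    also have "\<dots> = Re k * Re (vec_index v i) - Im k * Im (vec_index v i)"
      using kv[OF i(1)] by simp
    also have "\<dots> = inner (Re k *\<^sub>R u - Im k *\<^sub>R w) b"
      using cu[OF i(1)] cw[OF i(1)] i(2) by (simp add: inner_diff_left)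
    finally show "inner (T u) b = inner (Re k *\<^sub>R u - Im k *\<^sub>R w) b" .
  qed
  have e2: "T w = Re k *\<^sub>R w + Im k *\<^sub>R u"
  proof (rule euclidean_eqI)
    fix b :: 'a assume "b \<in> Basis"
    then obtain i where i: "i < n" "b = bs!i" using bs(2) n_def by (metis in_set_conv_nth)
    have "inner (T w) b = (\<Sum>j<n. Im (vec_index v j) * inner (T (bs!j)) (bs!i))"
      unfolding Tw i(2) by (simp add: inner_sum_left)
    also have "\<dots> = Im (vec_index (A *\<^sub>v v) i)"
      using Av[OF i(1)] by (simp add: Im_sum mult.commute)
    also have "\<dots> = Re k * Im (vec_index v i) + Im k * Re (vec_index v i)"
      using kv[OF i(1)] by simp
    also have "\<dots> = inner (Re k *\<^sub>R w + Im k *\<^sub>R u) b"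
      using cu[OF i(1)] cw[OF i(1)] i(2) by (simp add: inner_add_left)
    finally show "inner (T w) b = inner (Re k *\<^sub>R w + Im k *\<^sub>R u) b" .
  qed
  have nz: "(u, w) \<noteq> (0, 0)"
  proof
    assume "(u, w) = (0, 0)"
    then have "vec_index v i = 0" if "i < n" for i
      using cu[OF that] cw[OF that] by (simp add: complex_eq_iff)
    then have "v = 0\<^sub>v n" using dv by (intro eq_vecI) auto
    with v(2) show False by simp
  qed
  have "cplx_op T (u, w) = cscale k (u, w)"
    unfolding cplx_op_def cscale_def using e1 e2 by simp
  with nz show ?thesis unfolding cspectrum_def by blast
qed

lemma pos_ops_linear: "T \<in> pos_ops \<Longrightarrow> linear T" unfolding pos_ops_def by auto

lemma pos_ops_pos: "T \<in> pos_ops \<Longrightarrow> u \<noteq> 0 \<Longrightarrow> inner (T u) u > 0" unfolding pos_ops_def by auto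

lemma pos_ops_nonneg: "T \<in> pos_ops \<Longrightarrow> inner (T u) u \<ge> 0"
  using pos_ops_pos[of T u] linear_0[OF pos_ops_linear, of T] by (cases "u = 0") auto

lemma pos_ops_inj: "T \<in> pos_ops \<Longrightarrow> inj T"
proof (rule injI)
  fix x y assume T: "T \<in> pos_ops" and e: "T x = T y"
  have "T (x - y) = 0" using e linear_diff[OF pos_ops_linear[OF T]] by simp
  then show "x = y" using pos_ops_pos[OF T, of "x - y"] by (cases "x = y") auto
qed

lemma pos_ops_inv:
  fixes T :: "'a::euclidean_space \<Rightarrow> 'a"
  assumes T: "T \<in> pos_ops"
  shows "linear (inv T)" "\<And>x. T (inv T x) = x" "\<And>x. inv T (T x) = x" "inv T \<in> pos_ops"
proof -
  obtain f' where f': "linear f'" "\<forall>x. f' (T x) = x" "\<forall>x. T (f' x) = x"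
    using linear_injective_isomorphism[OF pos_ops_linear[OF T] pos_ops_inj[OF T]] by blast
  have eq: "inv T = f'"
    using f' by (metis inv_equality ext)
  show "linear (inv T)" "\<And>x. T (inv T x) = x" "\<And>x. inv T (T x) = x" using f' eq by auto
  show "inv T \<in> pos_ops" unfolding pos_ops_def
  proof (intro CollectI conjI allI impI)
    show "linear (inv T)" using f' eq by auto
    fix u :: 'a assume u: "u \<noteq> 0"
    have "f' u \<noteq> 0" using u f' linear_0[OF pos_ops_linear[OF T]] by metis
    then have "inner (T (f' u)) (f' u) > 0" using pos_ops_pos[OF T] by blast
    then show "inner (inv T u) u > 0" using f' eq by (simp add: inner_commute)
  qed
qed

lemma Re_cinner_pos:
  assumes T: "T \<in> pos_ops" and w: "w \<noteq> (0, 0)"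
  shows "Re (cinner (cplx_op T w) w) > 0"
proof -
  obtain u v where uv: "w = (u, v)" by (cases w)
  have "Re (cinner (cplx_op T w) w) = inner (T u) u + inner (T v) v"
    unfolding uv cinner_def cplx_op_def by simp
  moreover have "u \<noteq> 0 \<or> v \<noteq> 0" using w uv by auto
  ultimately show ?thesis using pos_ops_pos[OF T] pos_ops_nonneg[OF T, of u] pos_ops_nonneg[OF T, of v]
    by (smt (verit))
qed

lemma cinner_cscale: "cinner (cscale c x) y = c * cinner x y"
  unfolding cinner_def cscale_def
  by (simp add: complex_eq_iff inner_diff_left inner_add_left algebra_simps)

lemma cplx_op_cscale: "linear T \<Longrightarrow> cplx_op T (cscale c w) = cscale c (cplx_op T w)"
  unfolding cplx_op_def cscale_def by (simp add: linear_diff linear_add linear_scale)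

lemma coercive:
  fixes T :: "'a::euclidean_space \<Rightarrow> 'a"
  assumes T: "T \<in> pos_ops"
  shows "\<exists>c>0. \<forall>x. inner (T x) x \<ge> c * (norm x)^2"
proof -
  have bl: "bounded_linear T" using pos_ops_linear[OF T] linear_conv_bounded_linear by blast
  have cont: "continuous_on (sphere 0 1) (\<lambda>x. inner (T x) x)"
    by (intro continuous_intros linear_continuous_on bl)
  obtain b :: 'a where "b \<in> Basis" using nonempty_Basis by blast
  then have ne: "sphere (0::'a) 1 \<noteq> {}" by (metis norm_Basis mem_sphere_0 empty_iff)
  obtain x0 where x0: "x0 \<in> sphere 0 1" "\<forall>y\<in>sphere 0 1. inner (T x0) x0 \<le> inner (T y) y"
    using continuous_attains_inf[OF compact_sphere ne cont] by blast
  have "x0 \<noteq> 0" using x0(1) by auto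
  then have c0: "inner (T x0) x0 > 0" using pos_ops_pos[OF T] by blast
  show ?thesis
  proof (intro exI conjI allI)
    show "inner (T x0) x0 > 0" by (rule c0)
    fix x :: 'a
    show "inner (T x0) x0 * (norm x)^2 \<le> inner (T x) x"
    proof (cases "x = 0")
      case True then show ?thesis using linear_0[OF pos_ops_linear[OF T]] by simp
    next
      case False
      define y where "y = x /\<^sub>R norm x"
      have y: "y \<in> sphere 0 1" using False unfolding y_def by simp
      have xy: "x = norm x *\<^sub>R y" using False unfolding y_def by simp
      have "inner (T x) x = (norm x)^2 * inner (T y) y"
        by (subst (1 2) xy) (simp add: linear_scale[OF pos_ops_linear[OF T]] power2_eq_square)
      moreover have "inner (T x0) x0 \<le> inner (T y) y" using x0(2) y by blast
      then have "inner (T x0) x0 * (norm x)^2 \<le> inner (T y) y * (norm x)^2"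
        by (rule mult_right_mono) simp
      ultimately show ?thesis by (simp add: mult.commute)
    qed
  qed
qed

lemma bounded_op:
  fixes T :: "'a::euclidean_space \<Rightarrow> 'a"
  assumes "linear T"
  shows "\<exists>B>0. \<forall>x. norm (T x) \<le> B * norm x"
proof -
  have "bounded_linear T" using assms linear_conv_bounded_linear by blast
  then obtain K where "K > 0" "\<forall>x. norm (T x) \<le> norm x * K" using bounded_linear.pos_bounded by blast
  then show ?thesis by (metis mult.commute)
qed

lemma cinner_bound:
  fixes T :: "'a::euclidean_space \<Rightarrow> 'a"
  assumes B: "\<forall>x. norm (T x) \<le> B * norm x" and B0: "B > 0"
  shows "cmod (cinner (cplx_op T (u, v)) (u, v)) \<le> 2 * B * ((norm u)^2 + (norm v)^2)"
proof -
  have h: "\<bar>inner (T x) y\<bar> \<le> B * norm x * norm y" for x y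
  proof -
    have "\<bar>inner (T x) y\<bar> \<le> norm (T x) * norm y" by (rule Cauchy_Schwarz_ineq2)
    also have "\<dots> \<le> B * norm x * norm y" using B by (simp add: mult_right_mono)
    finally show ?thesis .
  qed
  have uv: "2 * (norm u * norm v) \<le> (norm u)^2 + (norm v)^2"
    using sum_squares_bound[of "norm u" "norm v"] by (simp add: power2_eq_square)
  have "cmod (cinner (cplx_op T (u, v)) (u, v)) \<le>
      \<bar>inner (T u) u + inner (T v) v\<bar> + \<bar>inner (T v) u - inner (T u) v\<bar>"
    using cmod_le[of "cinner (cplx_op T (u, v)) (u, v)"] unfolding cinner_def cplx_op_def by simp
  also have "\<dots> \<le> B * (norm u)^2 + B * (norm v)^2 + 2 * B * (norm u * norm v)"
  proof -
    have a1: "\<bar>inner (T u) u + inner (T v) v\<bar> \<le> \<bar>inner (T u) u\<bar> + \<bar>inner (T v) v\<bar>" by (rule abs_triangle_ineq)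
    have a2: "\<bar>inner (T v) u - inner (T u) v\<bar> \<le> \<bar>inner (T v) u\<bar> + \<bar>inner (T u) v\<bar>" by (rule abs_triangle_ineq4)
    have b1: "\<bar>inner (T u) u\<bar> \<le> B * (norm u)^2" using h[of u u] by (simp add: power2_eq_square mult_ac)
    have b2: "\<bar>inner (T v) v\<bar> \<le> B * (norm v)^2" using h[of v v] by (simp add: power2_eq_square mult_ac)
    have b3: "\<bar>inner (T v) u\<bar> \<le> B * (norm u * norm v)" using h[of v u] by (simp add: mult_ac)
    have b4: "\<bar>inner (T u) v\<bar> \<le> B * (norm u * norm v)" using h[of u v] by (simp add: mult_ac)
    show ?thesis using a1 a2 b1 b2 b3 b4 by linarith
  qed
  also have "\<dots> \<le> 2 * B * ((norm u)^2 + (norm v)^2)"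
    using uv B0 mult_left_mono[OF uv, of B] by (simp add: algebra_simps)
  finally show ?thesis .
qed

lemma num_range_bdd:
  fixes S T :: "'a::euclidean_space \<Rightarrow> 'a"
  assumes S: "S \<in> pos_ops" and T: "T \<in> pos_ops"
  shows "bdd_above ((\<lambda>z. cmod (Ln z)) ` num_range S T)"
proof -
  obtain cS where cS: "cS > 0" "\<forall>x. inner (S x) x \<ge> cS * (norm x)^2" using coercive[OF S] by blast
  obtain cT where cT: "cT > 0" "\<forall>x. inner (T x) x \<ge> cT * (norm x)^2" using coercive[OF T] by blast
  obtain BS where BS: "BS > 0" "\<forall>x. norm (S x) \<le> BS * norm x" using bounded_op[OF pos_ops_linear[OF S]] by blast
  obtain BT where BT: "BT > 0" "\<forall>x. norm (T x) \<le> BT * norm x" using bounded_op[OF pos_ops_linear[OF T]] by blast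
  define m where "m = cS / (2 * BT)"
  define M where "M = 2 * BS / cT"
  have m0: "m > 0" unfolding m_def using cS BT by simp
  show ?thesis unfolding bdd_above_def
  proof (intro exI ballI)
    fix r assume "r \<in> (\<lambda>z. cmod (Ln z)) ` num_range S T"
    then obtain u v where r: "r = cmod (Ln (cinner (cplx_op S (u,v)) (u,v) / cinner (cplx_op T (u,v)) (u,v)))"
      and w: "(u, v) \<noteq> (0, 0)"
      unfolding num_range_def by auto
    define p where "p = cinner (cplx_op S (u,v)) (u,v)"
    define q where "q = cinner (cplx_op T (u,v)) (u,v)"
    define N where "N = (norm u)^2 + (norm v)^2"
    have N0: "N > 0" using w unfolding N_def by (auto simp: add_pos_nonneg add_nonneg_pos)
    have Rep: "Re p \<ge> cS * N" unfolding p_def N_def cinner_def cplx_op_def using cS(2)[rule_format, of u] cS(2)[rule_format, of v]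
      by (simp add: algebra_simps)
    have Req: "Re q \<ge> cT * N" unfolding q_def N_def cinner_def cplx_op_def using cT(2)[rule_format, of u] cT(2)[rule_format, of v]
      by (simp add: algebra_simps)
    have pb: "cmod p \<le> 2 * BS * N" unfolding p_def N_def by (rule cinner_bound[OF BS(2) BS(1)])
    have qb: "cmod q \<le> 2 * BT * N" unfolding q_def N_def by (rule cinner_bound[OF BT(2) BT(1)])
    have pl: "cmod p \<ge> cS * N" using Rep complex_Re_le_cmod[of p] by linarith
    have ql: "cmod q \<ge> cT * N" using Req complex_Re_le_cmod[of q] by linarith
    have q0: "cmod q > 0" using ql cT(1) N0 by (smt (verit) mult_pos_pos)
    have p0: "cmod p > 0" using pl cS(1) N0 by (smt (verit) mult_pos_pos)
    define z where "z = p / q"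
    have zn: "cmod z = cmod p / cmod q" unfolding z_def by (simp add: norm_divide)
    have zl: "cmod z \<ge> m"
    proof -
      have "m = (cS * N) / (2 * BT * N)" unfolding m_def using N0 by simp
      also have "\<dots> \<le> cmod p / cmod q"
        using pl qb cS(1) N0 BT(1) q0 by (intro frac_le) auto
      finally show ?thesis using zn by simp
    qed
    have zu: "cmod z \<le> M"
    proof -
      have "cmod p / cmod q \<le> (2 * BS * N) / (cT * N)"
        using pb ql cS(1) N0 cT(1) p0 BS(1) by (intro frac_le) auto
      also have "\<dots> = M" unfolding M_def using N0 by simp
      finally show ?thesis using zn by simp
    qed
    have z0: "z \<noteq> 0" using zl m0 by auto
    have "r = cmod (Ln z)" unfolding r z_def p_def q_def by simp
    also have "\<dots> \<le> \<bar>Re (Ln z)\<bar> + \<bar>Im (Ln z)\<bar>" by (rule cmod_le)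
    also have "\<dots> \<le> \<bar>ln m\<bar> + \<bar>ln M\<bar> + pi"
    proof -
      have "Re (Ln z) = ln (cmod z)" using z0 by simp
      moreover have "ln m \<le> ln (cmod z)" using ln_le_cancel_iff[of m "cmod z"] zl m0 by linarith
      moreover have "ln (cmod z) \<le> ln M" using ln_le_cancel_iff[of "cmod z" M] zl zu m0 by linarith
      moreover have "\<bar>Im (Ln z)\<bar> \<le> pi" using mpi_less_Im_Ln[OF z0] Im_Ln_le_pi[OF z0] by auto
      ultimately show ?thesis by linarith
    qed
    finally show "r \<le> \<bar>ln m\<bar> + \<bar>ln M\<bar> + pi" .
  qed
qed

lemma norm_exp_minus_1: "cmod (exp z - 1) \<le> exp (cmod z) - 1"
proof -
  define f where "f = (\<lambda>n. z^n /\<^sub>R fact n)"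
  define g where "g = (\<lambda>n. (cmod z)^n /\<^sub>R fact n)"
  have "f sums exp z" unfolding f_def by (rule exp_converges)
  then have fs: "(\<lambda>n. f (Suc n)) sums (exp z - 1)" by (subst sums_Suc_iff) (simp add: f_def)
  have "g sums exp (cmod z)" unfolding g_def by (rule exp_converges)
  then have gs: "(\<lambda>n. g (Suc n)) sums (exp (cmod z) - 1)" by (subst sums_Suc_iff) (simp add: g_def)
  have ng: "norm (f (Suc n)) = g (Suc n)" for n unfolding f_def g_def by (simp add: norm_power norm_mult)
  have "cmod (exp z - 1) = norm (\<Sum>n. f (Suc n))" using fs sums_unique by metis
  also have "\<dots> \<le> (\<Sum>n. norm (f (Suc n)))"
    by (rule summable_norm) (use gs ng in \<open>simp add: sums_summable\<close>)
  also have "\<dots> = exp (cmod z) - 1" using sums_unique[OF gs] ng by simp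
  finally show ?thesis .
qed

lemma exp_chord:
  fixes t \<delta> :: real
  assumes "\<delta> > 0" "0 \<le> t" "t \<le> \<delta>"
  shows "exp t - 1 \<le> (exp \<delta> - 1) / \<delta> * t"
proof -
  have "exp ((1 - t/\<delta>) * 0 + (t/\<delta>) * \<delta>) \<le> (1 - t/\<delta>) * exp 0 + (t/\<delta>) * exp \<delta>"
    using convex_onD[OF exp_convex, of "t/\<delta>" 0 \<delta>] assms by simp
  then have "exp t \<le> (1 - t/\<delta>) + (t/\<delta>) * exp \<delta>" using assms by simp
  then have "exp t - 1 \<le> t/\<delta> * (exp \<delta> - 1)" by (simp add: algebra_simps)
  moreover have "(exp \<delta> - 1) / \<delta> * t = t/\<delta> * (exp \<delta> - 1)" by simp
  ultimately show ?thesis by (metis mult.commute times_divide_eq_left)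
qed

lemma eig_bound:
  fixes L G :: "'a::euclidean_space \<Rightarrow> 'a" and \<delta> :: real
  assumes d: "\<delta> > 0"
    and L: "L \<in> pos_ops" and G: "G \<in> pos_ops"
    and md: "min (spec_dist (inv L) G) (spec_dist L (inv G)) \<le> \<delta>"
    and lam: "lam \<in> cspectrum (\<lambda>x. x - L (G x))"
  shows "cmod lam \<le> (exp \<delta> - 1) / \<delta> * min (spec_dist (inv L) G) (spec_dist L (inv G))"
proof -
  define dm where "dm = min (spec_dist (inv L) G) (spec_dist L (inv G))"
  obtain w where w: "w \<noteq> (0,0)" "cplx_op (\<lambda>x. x - L (G x)) w = cscale lam w"
    using lam unfolding cspectrum_def by blast
  define mu where "mu = 1 - lam"
  have linL: "linear L" and linG: "linear G" using L G pos_ops_linear by auto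
  note iL = pos_ops_inv[OF L] and iG = pos_ops_inv[OF G]
  have LG: "cplx_op L (cplx_op G w) = cscale mu w"
  proof -
    obtain u v where uv: "w = (u, v)" by (cases w)
    have "u - L (G u) = Re lam *\<^sub>R u - Im lam *\<^sub>R v" "v - L (G v) = Re lam *\<^sub>R v + Im lam *\<^sub>R u"
      using w(2) unfolding uv cplx_op_def cscale_def by auto
    then have "L (G u) = (1 - Re lam) *\<^sub>R u + Im lam *\<^sub>R v" "L (G v) = (1 - Re lam) *\<^sub>R v - Im lam *\<^sub>R u"
      by (auto simp: algebra_simps eq_diff_eq)
    then show ?thesis unfolding uv cplx_op_def cscale_def mu_def by (simp add: algebra_simps)
  qed
  obtain \<zeta> where zeta: "exp \<zeta> = mu" "cmod \<zeta> \<le> dm"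
  proof (cases "spec_dist (inv L) G \<le> spec_dist L (inv G)")
    case True
    have "cplx_op G w = cplx_op (inv L) (cplx_op L (cplx_op G w))"
      unfolding cplx_op_def using iL by simp
    also have "\<dots> = cscale mu (cplx_op (inv L) w)" using LG cplx_op_cscale[OF iL(1)] by simp
    finally have e: "cinner (cplx_op G w) w = mu * cinner (cplx_op (inv L) w) w"
      by (simp add: cinner_cscale)
    define p where "p = cinner (cplx_op (inv L) w) w"
    define q where "q = cinner (cplx_op G w) w"
    have p0: "p \<noteq> 0" using Re_cinner_pos[OF iL(4) w(1)] unfolding p_def by auto
    have q0: "q \<noteq> 0" using Re_cinner_pos[OF G w(1)] unfolding q_def by auto
    define z where "z = p / q"
    have zin: "z \<in> num_range (inv L) G" unfolding num_range_def z_def p_def q_def using w(1) by blast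
    have z0: "z \<noteq> 0" using p0 q0 unfolding z_def by simp
    have muz: "mu = inverse z" using e p0 unfolding z_def p_def[symmetric] q_def[symmetric]
      by (simp add: field_simps)
    have "exp (- Ln z) = mu" using z0 muz by (simp add: exp_minus)
    moreover have "cmod (- Ln z) \<le> dm"
    proof -
      have "cmod (Ln z) \<le> spec_dist (inv L) G"
        unfolding spec_dist_def using zin num_range_bdd[OF iL(4) G] by (intro cSup_upper) auto
      then show ?thesis using True unfolding dm_def by simp
    qed
    ultimately show ?thesis using that by blast
  next
    case False
    define y where "y = cplx_op G w"
    have y0: "y \<noteq> (0,0)"
    proof
      assume "y = (0,0)"
      then have "G (fst w) = G 0" "G (snd w) = G 0" unfolding y_def cplx_op_def using linear_0[OF linG] by auto
      then have "fst w = 0" "snd w = 0" using pos_ops_inj[OF G] by (auto dest: injD)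
      then show False using w(1) by (cases w) auto
    qed
    have wy: "w = cplx_op (inv G) y" unfolding y_def cplx_op_def using iG by simp
    have e: "cinner (cplx_op L y) y = mu * cinner (cplx_op (inv G) y) y"
      using LG wy unfolding y_def by (simp add: cinner_cscale)
    define p where "p = cinner (cplx_op L y) y"
    define q where "q = cinner (cplx_op (inv G) y) y"
    have p0: "p \<noteq> 0" using Re_cinner_pos[OF L y0] unfolding p_def by auto
    have q0: "q \<noteq> 0" using Re_cinner_pos[OF iG(4) y0] unfolding q_def by auto
    have muz: "mu = p / q" using e q0 unfolding p_def[symmetric] q_def[symmetric] by simp
    have zin: "mu \<in> num_range L (inv G)" unfolding num_range_def muz p_def q_def using y0 by blast
    have mu0: "mu \<noteq> 0" using muz p0 q0 by simp
    have "exp (Ln mu) = mu" using mu0 by simp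
    moreover have "cmod (Ln mu) \<le> dm"
    proof -
      have "cmod (Ln mu) \<le> spec_dist L (inv G)"
        unfolding spec_dist_def using zin num_range_bdd[OF L iG(4)] by (intro cSup_upper) auto
      then show ?thesis using False unfolding dm_def by simp
    qed
    ultimately show ?thesis using that by blast
  qed
  have "cmod lam = cmod (exp \<zeta> - 1)" using zeta(1) unfolding mu_def by (simp add: norm_minus_commute)
  also have "\<dots> \<le> exp (cmod \<zeta>) - 1" by (rule norm_exp_minus_1)
  also have "\<dots> \<le> exp dm - 1" using zeta(2) by simp
  also have "\<dots> \<le> (exp \<delta> - 1) / \<delta> * dm"
    using exp_chord[OF d, of dm] zeta(2) md norm_ge_zero[of \<zeta>] unfolding dm_def by linarith
  finally show ?thesis unfolding dm_def .
qed

theorem lemmaA2: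
  fixes L G :: "'a::euclidean_space \<Rightarrow> 'a" and \<delta> :: real
  assumes "\<delta> > 0"
    and "L \<in> pos_ops" and "G \<in> pos_ops"
    and "min (spec_dist (inv L) G) (spec_dist L (inv G)) \<le> \<delta>"
  shows "op_spectral_radius (\<lambda>x. x - L (G x))
           \<le> (exp \<delta> - 1) / \<delta> * min (spec_dist (inv L) G) (spec_dist L (inv G))"
proof -
  have lin: "linear (\<lambda>x. x - L (G x))"
  proof (rule linearI)
    have lL: "linear L" and lG: "linear G" using pos_ops_linear assms(2,3) by auto
    fix x y :: 'a and c :: real
    show "x + y - L (G (x + y)) = (x - L (G x)) + (y - L (G y))"
      by (simp add: linear_add[OF lL] linear_add[OF lG])
    show "c *\<^sub>R x - L (G (c *\<^sub>R x)) = c *\<^sub>R (x - L (G x))"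
      by (simp add: linear_scale[OF lL] linear_scale[OF lG] scaleR_diff_right)
  qed
  have ne: "cspectrum (\<lambda>x. x - L (G x)) \<noteq> {}" by (rule cspectrum_nonempty[OF lin])
  show ?thesis unfolding op_spectral_radius_def
    using ne eig_bound[OF assms] by (intro cSup_least) auto
qed

end
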